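(* For each integer $N\ge1$, write $N=4m+k$ with $m\in\mathbb{N}$, $k\in\{0,1,2,3\}$, let $\alpha=((k+1)\bmod 4)-1$, and set $N_1^\star=(N-\alpha)/4$, $N_2^\star=(N+\alpha)/2$. Then $N_1^\star,N_2^\star$ are integers with $N_1^\star\ge0$, $N_2^\star\ge1$, the array $\mathbb{S}^\star(N)\triangleq\mathbb{D}_{\mathrm{CNA}}(N_1^\star,N_2^\star)$ has exactly $N$ elements, its sum set is $\mathbb{S}^\star(N)+\mathbb{S}^\star(N)=[0:2\max\mathbb{S}^\star(N)]$ with $$|\mathbb{S}^\star(N)+\mathbb{S}^\star(N)|=\frac{N^2+6N-7}{4}-\frac{(\alpha-1)^2}{4}+1,$$ and the redundancy $R(N)\triangleq\dfrac{N(N+1)}{2\,|\mathbb{S}^\star(N)+\mathbb{S}^\star(N)|}$ satisfies $\lim_{N\to\infty}R(N)=2$.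
   Context: For $N_1\in\mathbb{N}$, $N_2\ge1$: $\mathbb{D}_1=[0:N_1-1]$, $\mathbb{D}_2=\{j(N_1+1): j\in[0:N_2-1]\}$, and $\mathbb{D}_{\mathrm{CNA}}(N_1,N_2)=\mathbb{D}_1\cup(\mathbb{D}_2+N_1)\cup(\mathbb{D}_1+(N_1+1)N_2)\subset\mathbb{N}$. Sum set $\mathbb{A}+\mathbb{B}=\{a+b:a\in\mathbb{A},b\in\mathbb{B}\}$, shift $\mathbb{A}+c=\{a+c\}$, $[a:b]=\{c\in\mathbb{Z}:a\le c\le b\}$. *)

theory Defs
  imports Complex_Main
begin

definition sumset :: "nat set \<Rightarrow> nat set \<Rightarrow> nat set" where
  "sumset A B = {a + b | a b. a \<in> A \<and> b \<in> B}"

definition D1 :: "nat \<Rightarrow> nat set" where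
  "D1 N1 = {..<N1}"

definition D2 :: "nat \<Rightarrow> nat \<Rightarrow> nat set" where
  "D2 N1 N2 = {j * (N1 + 1) | j. j < N2}"

definition D_CNA :: "nat \<Rightarrow> nat \<Rightarrow> nat set" where
  "D_CNA N1 N2 = D1 N1 \<union> ((\<lambda>x. x + N1) ` D2 N1 N2) \<union> ((\<lambda>x. x + (N1 + 1) * N2) ` D1 N1)"

definition alpha :: "nat \<Rightarrow> int" where
  "alpha N = ((int (N mod 4) + 1) mod 4) - 1"

definition N1star :: "nat \<Rightarrow> int" where
  "N1star N = (int N - alpha N) div 4"

definition N2star :: "nat \<Rightarrow> int" where
  "N2star N = (int N + alpha N) div 2"

definition Sstar :: "nat \<Rightarrow> nat set" where
  "Sstar N = D_CNA (nat (N1star N)) (nat (N2star N))"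

definition redundancy :: "nat \<Rightarrow> real" where
  "redundancy N = real (N * (N + 1)) / (2 * real (card (sumset (Sstar N) (Sstar N))))"

end

theory Submission
  imports Defs
begin


lemma mem_DCNA: "x \<in> D_CNA N1 N2 \<longleftrightarrow> x < N1 \<or> (\<exists>j<N2. x = j*(N1+1)+N1) \<or> (N2*(N1+1) \<le> x \<and> x < N2*(N1+1)+N1)"
proof -
  have 3: "x \<in> (\<lambda>x. x + (N1 + 1) * N2) ` D1 N1 \<longleftrightarrow> (N2*(N1+1) \<le> x \<and> x < N2*(N1+1)+N1)"
  proof
    assume "N2*(N1+1) \<le> x \<and> x < N2*(N1+1)+N1"
    then show "x \<in> (\<lambda>x. x + (N1 + 1) * N2) ` D1 N1"
      unfolding D1_def by (intro image_eqI[where x="x - N2*(N1+1)"]) (auto simp: algebra_simps)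
  qed (auto simp: D1_def algebra_simps)
  show ?thesis unfolding D_CNA_def Un_iff 3 by (auto simp: D1_def D2_def)
qed

lemma D2_img: "D2 N1 N2 = (\<lambda>j. j*(N1+1)) ` {..<N2}"
  unfolding D2_def by auto

lemma card_DCNA: assumes "N2 \<ge> 1" shows "card (D_CNA N1 N2) = 2*N1+N2"
proof -
  have i1: "inj_on (\<lambda>j. j*(N1+1) + N1) {..<N2}"
  proof (rule inj_onI)
    fix x y assume "x*(N1+1) + N1 = y*(N1+1) + N1"
    then have "x*(N1+1) = y*(N1+1)" by simp
    then show "x = y" by (metis mult_cancel2 add_is_0 one_neq_zero)
  qed
  have e: "D_CNA N1 N2 = {..<N1} \<union> (\<lambda>j. j*(N1+1) + N1) ` {..<N2} \<union> (\<lambda>x. x + (N1 + 1) * N2) ` {..<N1}"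
    unfolding D_CNA_def D1_def D2_img image_image by simp
  have d1: "{..<N1} \<inter> (\<lambda>j. j*(N1+1) + N1) ` {..<N2} = {}" by auto
  have d2: "({..<N1} \<union> (\<lambda>j. j*(N1+1) + N1) ` {..<N2}) \<inter> (\<lambda>x. x + (N1 + 1) * N2) ` {..<N1} = {}"
  proof -
    have "j*(N1+1) + N1 < N2*(N1+1)" if "j < N2" for j
    proof -
      have "Suc j * (N1+1) \<le> N2*(N1+1)" using that by (intro mult_le_mono1) simp
      then show ?thesis by simp
    qed
    moreover have "N1 \<le> N2*(N1+1)" using assms by (metis le_add2 mult_le_mono1 mult_1 add.commute order_trans)
    ultimately have "\<And>y. y \<in> {..<N1} \<union> (\<lambda>j. j*(N1+1) + N1) ` {..<N2} \<Longrightarrow> y < N2*(N1+1)"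
      by (elim UnE imageE) auto
    moreover have "\<And>y. y \<in> (\<lambda>x. x + (N1 + 1) * N2) ` {..<N1} \<Longrightarrow> y \<ge> N2*(N1+1)"
      by (auto simp: mult.commute)
    ultimately show ?thesis by (metis disjoint_iff leD)
  qed
  have c1: "card ({..<N1} \<union> (\<lambda>j. j*(N1+1) + N1) ` {..<N2}) = N1 + N2"
    using card_Un_disjoint[OF _ _ d1] card_image[OF i1] by simp
  have c2: "card ((\<lambda>x. x + (N1 + 1) * N2) ` {..<N1}) = N1"
    by (subst card_image) (auto simp: inj_on_def)
  show ?thesis unfolding e
    using card_Un_disjoint[OF _ _ d2] c1 c2 by simp
qed

lemma fin_DCNA: "finite (D_CNA N1 N2)"
  unfolding D_CNA_def D1_def D2_img by simp

lemma Max_DCNA: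
  assumes "N2 \<ge> 1"
  shows "Max (D_CNA N1 N2) = (if N1 = 0 then N2 - 1 else N2*(N1+1)+N1-1)"
proof (rule Max_eqI[OF fin_DCNA])
  fix y assume "y \<in> D_CNA N1 N2"
  then show "y \<le> (if N1 = 0 then N2 - 1 else N2*(N1+1)+N1-1)"
    unfolding mem_DCNA
  proof (elim disjE exE conjE)
    fix j assume "j < N2" "y = j*(N1+1)+N1"
    moreover have "Suc j * (N1+1) \<le> N2*(N1+1)" using \<open>j < N2\<close> by (intro mult_le_mono1) simp
    ultimately show ?thesis by auto
  next
    assume "y < N1" then show ?thesis by auto
  next
    assume "N2*(N1+1) \<le> y" "y < N2*(N1+1)+N1" then show ?thesis by auto
  qed
next
  show "(if N1 = 0 then N2 - 1 else N2*(N1+1)+N1-1) \<in> D_CNA N1 N2"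
    unfolding mem_DCNA using assms by (cases "N1 = 0") auto
qed


lemma inA: "x < N1 \<Longrightarrow> x \<in> D_CNA N1 N2" by (simp add: mem_DCNA)
lemma inB: "j < N2 \<Longrightarrow> j*(N1+1)+N1 \<in> D_CNA N1 N2" unfolding mem_DCNA by blast
lemma inC: "r < N1 \<Longrightarrow> N2*(N1+1)+r \<in> D_CNA N1 N2" unfolding mem_DCNA by simp

lemma cover:
  assumes N1: "N1 \<ge> 1" and N2: "N2 \<ge> 1" and t: "t \<le> 2*(N2*(N1+1)+N1-1)"
  shows "\<exists>a\<in>D_CNA N1 N2. \<exists>b\<in>D_CNA N1 N2. t = a + b"
proof -
  let ?S = "D_CNA N1 N2"
  define L where "L = N1 + 1"
  define q where "q = (t+1) div L"
  define r where "r = (t+1) mod L"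
  have tq: "t + 1 = q*L + r" unfolding q_def r_def by simp
  have rL: "r < L" unfolding r_def L_def by simp
  have t2: "t + 1 < (2*N2+2)*L" using t N1 unfolding L_def by (simp add: algebra_simps)
  have "q*L < (2*N2+2)*L" using tq t2 by linarith
  then have "q < 2*N2+2" by (metis mult_less_cancel2)
  then have qb: "q \<le> 2*N2+1" by simp
  show ?thesis
  proof (cases "t < N1")
    case True
    then show ?thesis using inA[of t N1 N2] inA[of 0 N1 N2] N1 by force
  next
    case False
    have "q \<noteq> 0"
    proof
      assume "q = 0" then have "t + 1 = r" using tq by simp
      then show False using rL False unfolding L_def by simp
    qed
    then obtain p where qp: "q = Suc p" using not0_implies_Suc by blast
    have tp: "t = p*L + N1 + r" using tq qp unfolding L_def by simp
    consider "q \<le> N2" "r < N1" | "q \<le> N2" "r = N1" | "N2 < q" "q \<le> 2*N2" "r < N1"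
      | "N2 < q" "q < 2*N2" "r = N1" | "q = 2*N2" "r = N1" | "q = 2*N2+1"
      using qb rL unfolding L_def by linarith
    then show ?thesis
    proof cases
      case 1
      then show ?thesis using inB[of p N2 N1] inA[of r N1 N2] tp qp unfolding L_def by auto
    next
      case 2
      then have "t = (p*(N1+1)+N1) + (0*(N1+1)+N1)" using tp unfolding L_def by simp
      then show ?thesis using inB[of p N2 N1] inB[of 0 N2 N1] 2 qp N2 by fastforce
    next
      case 3
      define k where "k = p - N2"
      have k: "p = N2 + k" "k < N2" using 3 qp unfolding k_def by linarith+
      have "t = (N2*(N1+1)+r) + (k*(N1+1)+N1)" using tp k unfolding L_def by (simp add: algebra_simps)
      then show ?thesis using inC[of r N1 N2] inB[of k N2 N1] 3 k by fastforce
    next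
      case 4
      obtain M where M: "N2 = Suc M" using N2 by (metis Suc_le_D One_nat_def)
      define k where "k = p - M"
      have k: "p = M + k" "k < N2" using 4 qp M unfolding k_def by linarith+
      have "t = (M*(N1+1)+N1) + (k*(N1+1)+N1)" using tp k 4 unfolding L_def by (simp add: algebra_simps)
      then show ?thesis using inB[of M N2 N1] inB[of k N2 N1] M k by fastforce
    next
      case 5
      obtain n where n: "N1 = Suc n" using N1 by (metis Suc_le_D One_nat_def)
      from 5 have "t = (N2*(N1+1)+n) + (N2*(N1+1)+0)" using tq n unfolding L_def by (simp add: algebra_simps)
      then show ?thesis using inC[of n N1 N2] inC[of 0 N1 N2] n by fastforce
    next
      case 6
      then have p: "p = 2*N2" using qp by simp
      have "r + 2 \<le> N1" using t tp p N1 N2 unfolding L_def by (simp add: algebra_simps)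
      obtain n where n: "N1 = Suc n" using N1 by (metis Suc_le_D One_nat_def)
      have "t = (N2*(N1+1)+n) + (N2*(N1+1)+(r+1))" using tq 6 n unfolding L_def by (simp add: algebra_simps)
      with \<open>r + 2 \<le> N1\<close> show ?thesis using inC[of n N1 N2] inC[of "r+1" N1 N2] n by fastforce
    qed
  qed
qed


lemma sumset_DCNA:
  assumes N2: "N2 \<ge> 1"
  shows "sumset (D_CNA N1 N2) (D_CNA N1 N2) = {0..2*Max (D_CNA N1 N2)}"
proof
  show "sumset (D_CNA N1 N2) (D_CNA N1 N2) \<subseteq> {0..2*Max (D_CNA N1 N2)}"
  proof
    fix x assume "x \<in> sumset (D_CNA N1 N2) (D_CNA N1 N2)"
    then obtain a b where "a \<in> D_CNA N1 N2" "b \<in> D_CNA N1 N2" "x = a + b" unfolding sumset_def by blast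
    then show "x \<in> {0..2*Max (D_CNA N1 N2)}" using Max_ge[OF fin_DCNA, of a N1 N2] Max_ge[OF fin_DCNA, of b N1 N2] by simp
  qed
next
  show "{0..2*Max (D_CNA N1 N2)} \<subseteq> sumset (D_CNA N1 N2) (D_CNA N1 N2)"
  proof
    fix t assume t: "t \<in> {0..2*Max (D_CNA N1 N2)}"
    have "\<exists>a\<in>D_CNA N1 N2. \<exists>b\<in>D_CNA N1 N2. t = a + b"
    proof (cases "N1 = 0")
      case True
      then have t': "t \<le> 2*(N2-1)" using t Max_DCNA[OF N2] by simp
      have m: "x < N2 \<Longrightarrow> x \<in> D_CNA N1 N2" for x using True by (simp add: mem_DCNA)
      show ?thesis
      proof (cases "t < N2")
        case True
        then show ?thesis using m[of t] m[of 0] N2 by force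
      next
        case False
        then have "t - (N2-1) < N2" "N2 - 1 < N2" "t = (N2-1) + (t - (N2-1))" using t' N2 by linarith+
        then show ?thesis using m by blast
      qed
    next
      case False
      then show ?thesis using cover[of N1 N2 t] t Max_DCNA[OF N2] N2 by simp
    qed
    then show "t \<in> sumset (D_CNA N1 N2) (D_CNA N1 N2)" unfolding sumset_def by blast
  qed
qed

lemma fin_part:
  assumes h1: "N1star N = int n1" and h2: "N2star N = int n2" and n2: "n2 \<ge> 1" and NN: "2*n1+n2 = N"
    and F: "real (2 * (if n1 = 0 then n2 - 1 else n2*(n1+1)+n1-1) + 1) = F"
  shows "N1star N \<ge> 0 \<and> N2star N \<ge> 1 \<and> card (Sstar N) = N
     \<and> sumset (Sstar N) (Sstar N) = {0 .. 2 * Max (Sstar N)}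
     \<and> real (card (sumset (Sstar N) (Sstar N))) = F"
proof -
  have S: "Sstar N = D_CNA n1 n2" unfolding Sstar_def h1 h2 by simp
  show ?thesis
    using h1 h2 n2 NN F card_DCNA[OF n2, of n1] sumset_DCNA[OF n2, of n1] Max_DCNA[OF n2, of n1]
    unfolding S by simp
qed

lemma alpha_range: "-1 \<le> alpha N \<and> alpha N \<le> 2"
  unfolding alpha_def by auto


lemma pointwise:
  assumes "N \<ge> 1"
  shows "4 dvd (int N - alpha N) \<and> 2 dvd (int N + alpha N)
          \<and> N1star N \<ge> 0 \<and> N2star N \<ge> 1
          \<and> card (Sstar N) = N
          \<and> sumset (Sstar N) (Sstar N) = {0 .. 2 * Max (Sstar N)}
          \<and> real (card (sumset (Sstar N) (Sstar N)))
              = (real N ^ 2 + 6 * real N - 7) / 4 - (real_of_int (alpha N) - 1) ^ 2 / 4 + 1"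
proof -
  define m where "m = N div 4"
  define k where "k = N mod 4"
  have Nmk: "N = 4*m + k" unfolding m_def k_def by simp
  have "k < 4" unfolding k_def by simp
  then consider "k = 0" | "k = 1" | "k = 2" | "k = 3" by linarith
  then show ?thesis
  proof cases
    case 1
    then have m1: "m \<ge> 1" using assms Nmk by simp
    have a: "alpha N = 0" unfolding alpha_def using 1 k_def by simp
    have n1: "N1star N = int m" unfolding N1star_def a using Nmk 1 by simp
    have n2: "N2star N = int (2*m)" unfolding N2star_def a using Nmk 1 by simp
    have F: "real (2 * (if m = 0 then 2*m - 1 else (2*m)*(m+1)+m-1) + 1) =
      (real N ^ 2 + 6 * real N - 7) / 4 - (real_of_int (alpha N) - 1) ^ 2 / 4 + 1"
      using m1 unfolding a unfolding Nmk 1 by (simp add: algebra_simps power2_eq_square of_nat_diff; simp add: field_simps)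
    have c1: "2*m \<ge> 1" "2*m+2*m = N" using m1 Nmk 1 by simp_all
    have e: "int N - alpha N = 4*(int m)" "int N + alpha N = 2*(2*int m)" using a Nmk 1 by simp_all
    have dv: "4 dvd (int N - alpha N)" "2 dvd (int N + alpha N)" unfolding e by (rule dvd_triv_left)+
    show ?thesis by (rule conjI[OF dv(1) conjI[OF dv(2) fin_part[OF n1 n2 c1 F]]])
  next
    case 2
    have a: "alpha N = 1" unfolding alpha_def using 2 k_def by simp
    have n1: "N1star N = int m" unfolding N1star_def a using Nmk 2 by simp
    have n2: "N2star N = int (2*m+1)" unfolding N2star_def a using Nmk 2 by simp
    have F: "real (2 * (if m = 0 then (2*m+1) - 1 else (2*m+1)*(m+1)+m-1) + 1) =
      (real N ^ 2 + 6 * real N - 7) / 4 - (real_of_int (alpha N) - 1) ^ 2 / 4 + 1"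
    proof -
      have nv: "2 * (if m = 0 then (2*m+1) - 1 else (2*m+1)*(m+1)+m-1) + 1 = 4*m*m+8*m+1"
        by (cases m) (simp_all add: algebra_simps)
      show ?thesis unfolding nv a unfolding Nmk 2 by (simp add: power2_eq_square field_simps)
    qed
    have c1: "2*m+1 \<ge> 1" "2*m+(2*m+1) = N" using Nmk 2 by simp_all
    have e: "int N - alpha N = 4*(int m)" "int N + alpha N = 2*(2*int m+1)" using a Nmk 2 by simp_all
    have dv: "4 dvd (int N - alpha N)" "2 dvd (int N + alpha N)" unfolding e by (rule dvd_triv_left)+
    show ?thesis by (rule conjI[OF dv(1) conjI[OF dv(2) fin_part[OF n1 n2 c1 F]]])
  next
    case 3
    have a: "alpha N = 2" unfolding alpha_def using 3 k_def by simp
    have n1: "N1star N = int m" unfolding N1star_def a using Nmk 3 by simp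
    have n2: "N2star N = int (2*m+2)" unfolding N2star_def a using Nmk 3 by simp
    have F: "real (2 * (if m = 0 then (2*m+2) - 1 else (2*m+2)*(m+1)+m-1) + 1) =
      (real N ^ 2 + 6 * real N - 7) / 4 - (real_of_int (alpha N) - 1) ^ 2 / 4 + 1"
    proof -
      have nv: "2 * (if m = 0 then (2*m+2) - 1 else (2*m+2)*(m+1)+m-1) + 1 = 4*m*m+10*m+3"
        by (cases m) (simp_all add: algebra_simps)
      show ?thesis unfolding nv a unfolding Nmk 3 by (simp add: power2_eq_square field_simps)
    qed
    have c1: "2*m+2 \<ge> 1" "2*m+(2*m+2) = N" using Nmk 3 by simp_all
    have e: "int N - alpha N = 4*(int m)" "int N + alpha N = 2*(2*int m+2)" using a Nmk 3 by simp_all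
    have dv: "4 dvd (int N - alpha N)" "2 dvd (int N + alpha N)" unfolding e by (rule dvd_triv_left)+
    show ?thesis by (rule conjI[OF dv(1) conjI[OF dv(2) fin_part[OF n1 n2 c1 F]]])
  next
    case 4
    have a: "alpha N = -1" unfolding alpha_def using 4 k_def by simp
    have n1: "N1star N = int (m+1)" unfolding N1star_def a using Nmk 4 by simp
    have n2: "N2star N = int (2*m+1)" unfolding N2star_def a using Nmk 4 by simp
    have F: "real (2 * (if m+1 = 0 then (2*m+1) - 1 else (2*m+1)*(m+1+1)+(m+1)-1) + 1) =
      (real N ^ 2 + 6 * real N - 7) / 4 - (real_of_int (alpha N) - 1) ^ 2 / 4 + 1"
      unfolding a unfolding Nmk 4 by (simp add: algebra_simps power2_eq_square of_nat_diff; simp add: field_simps)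
    have c1: "2*m+1 \<ge> 1" "2*(m+1)+(2*m+1) = N" using Nmk 4 by simp_all
    have e: "int N - alpha N = 4*(int m+1)" "int N + alpha N = 2*(2*int m+1)" using a Nmk 4 by simp_all
    have dv: "4 dvd (int N - alpha N)" "2 dvd (int N + alpha N)" unfolding e by (rule dvd_triv_left)+
    show ?thesis by (rule conjI[OF dv(1) conjI[OF dv(2) fin_part[OF n1 n2 c1 F]]])
  qed
qed



lemma red_bound:
  assumes N: "N \<ge> 2"
  shows "norm (redundancy N - 2) \<le> norm (1 / real N) * 24"
proof -
  define c where "c = real (card (sumset (Sstar N) (Sstar N)))"
  define e where "e = (real_of_int (alpha N) - 1) ^ 2"
  have ce: "c = (real N ^ 2 + 6 * real N - 7) / 4 - e / 4 + 1"
  proof -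
    have "N \<ge> 1" using N by simp
    from pointwise[OF this] show ?thesis unfolding c_def e_def by (elim conjE) assumption
  qed
  have ar: "-1 \<le> alpha N" "alpha N \<le> 2" using alpha_range by auto
  have e0: "0 \<le> e" unfolding e_def by simp
  have "alpha N = -1 \<or> alpha N = 0 \<or> alpha N = 1 \<or> alpha N = 2" using ar by linarith
  then have e4: "e \<le> 4" unfolding e_def by (elim disjE) simp_all
  have Nr: "real N \<ge> 2" using N by simp
  have sq: "real N ^ 2 \<ge> 2 * real N" using Nr by (simp add: power2_eq_square)
  have c4: "4 * c = real N ^ 2 + 6 * real N - 3 - e" using ce by (simp add: field_simps)
  have cpos: "c > 0" using c4 e4 Nr sq by linarith
  have R: "redundancy N = real N * (real N + 1) / (2 * c)"
    unfolding redundancy_def c_def by (simp add: algebra_simps)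
  have R2: "redundancy N - 2 = (real N * (real N + 1) - 4 * c) / (2 * c)"
    unfolding R using cpos by (simp add: field_simps)
  have x: "\<bar>real N * (real N + 1) - 4 * c\<bar> \<le> 5 * real N"
    using c4 e0 e4 Nr by (simp add: power2_eq_square algebra_simps abs_le_iff)
  have "\<bar>redundancy N - 2\<bar> \<le> 5 * real N / (2 * c)"
    unfolding R2 abs_divide using cpos x by (simp add: divide_right_mono)
  also have "\<dots> \<le> 24 / real N"
  proof -
    have "5 * (real N * real N) \<le> 24 * (2 * c)" using c4 e4 Nr sq unfolding power2_eq_square by linarith
    then show ?thesis using cpos Nr by (simp add: field_simps)
  qed
  finally show ?thesis using Nr by simp
qed

lemma red_lim: "redundancy \<longlonglongrightarrow> 2"
proof (rule LIM_zero_cancel)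
  show "(\<lambda>n. redundancy n - 2) \<longlonglongrightarrow> 0"
  proof (rule tendsto_0_le[OF lim_inverse_n'])
    show "\<forall>\<^sub>F n in sequentially. norm (redundancy n - 2) \<le> norm (1 / real n) * 24"
      using red_bound eventually_at_top_linorder by blast
  qed
qed

theorem mainTheorem5:
  shows "(\<forall>N::nat. N \<ge> 1 \<longrightarrow>
            4 dvd (int N - alpha N) \<and> 2 dvd (int N + alpha N)
          \<and> N1star N \<ge> 0 \<and> N2star N \<ge> 1
          \<and> card (Sstar N) = N
          \<and> sumset (Sstar N) (Sstar N) = {0 .. 2 * Max (Sstar N)}
          \<and> real (card (sumset (Sstar N) (Sstar N)))
              = (real N ^ 2 + 6 * real N - 7) / 4 - (real_of_int (alpha N) - 1) ^ 2 / 4 + 1)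
        \<and> (redundancy \<longlonglongrightarrow> 2)"
  using pointwise red_lim by blast

end
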